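(* Let $A$ be a finite totally ordered alphabet and let $u\in A^{+}$ be a primitive word. Then the semigroups $S_{u}$ and $S(u)$ (defined in the context) are isomorphic; indeed the map $[x]\mapsto x'$ $(x\in A^{+})$ is a well-defined isomorphism $S_{u}\to S(u)$.
   Context: A word is primitive if it is not a power $r^{t}$ ($t\ge 2$) of another word. Words $w=xy$ and $yx$ are conjugates; the necklace $n(u)$ of a primitive word $u$ is its set of conjugates. For each letter $a\in A$ let $a'$ be the partial one-to-one map on $n(u)$ whose domain is the set of words of $n(u)$ beginning with $a$, given by $ax\mapsto xa$ (so $a'$ is the empty map if $a$ does not occur in $u$). For $x=b_{1}\cdots b_{m}\in A^{+}$ put $x'=b_{1}'b_{2}'\cdots b_{m}'$ (composition of partial maps, from left to right). $S(u)$ is the semigroup of partial maps on $n(u)$ generated by $\{a' : a\in A\}$ under composition. Let $\langle u\rangle=\{u^{m}:m\ge 1\}$ and let $\rho_{u}$ be the syntactic congruence of $\langle u\rangle$ on $A^{+}$: for $x,y\in A^{+}$, $x\,\rho_{u}\,y$ iff for all $p,q\in A^{*}$, $pxq\in\langle u\rangle\Leftrightarrow pyq\in\langle u\rangle$. $S_{u}=A^{+}/\rho_{u}$, and $[x]$ denotes the $\rho_u$-class of $x$. *)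

theory Defs
  imports Main
begin

definition Aplus :: "'a set \<Rightarrow> 'a list set" where
  "Aplus A = {w. w \<in> lists A \<and> w \<noteq> []}"

definition primitive :: "'a list \<Rightarrow> bool" where
  "primitive u \<longleftrightarrow> \<not> (\<exists>r t. t \<ge> 2 \<and> u = concat (replicate t r))"

definition necklace :: "'a list \<Rightarrow> 'a list set" where
  "necklace u = {y @ x | x y. u = x @ y}"

definition letter_map :: "'a list \<Rightarrow> 'a \<Rightarrow> ('a list \<Rightarrow> 'a list option)" where
  "letter_map u a = (\<lambda>w. if w \<in> necklace u \<and> w \<noteq> [] \<and> hd w = a
                         then Some (tl w @ [a]) else None)"

text \<open>x' = b1' b2' ... bm', composition left to right: first apply b1', then b2', ...
  In map_comp notation (g o_m f) means apply f first, then g.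
  (The value on the empty word is irrelevant; only nonempty words are used.)\<close>
fun word_map :: "'a list \<Rightarrow> 'a list \<Rightarrow> ('a list \<Rightarrow> 'a list option)" where
  "word_map u [] = Some"
| "word_map u [b] = letter_map u b"
| "word_map u (b # c # bs) = word_map u (c # bs) \<circ>\<^sub>m letter_map u b"

inductive_set Su_maps :: "'a set \<Rightarrow> 'a list \<Rightarrow> ('a list \<Rightarrow> 'a list option) set"
  for A :: "'a set" and u :: "'a list" where
  gen: "a \<in> A \<Longrightarrow> letter_map u a \<in> Su_maps A u"
| comp: "f \<in> Su_maps A u \<Longrightarrow> g \<in> Su_maps A u \<Longrightarrow> (g \<circ>\<^sub>m f) \<in> Su_maps A u"

definition powers :: "'a list \<Rightarrow> 'a list set" where
  "powers u = {concat (replicate m u) | m. m \<ge> 1}"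

definition synt_cong :: "'a set \<Rightarrow> 'a list \<Rightarrow> ('a list \<times> 'a list) set" where
  "synt_cong A u = {(x, y). x \<in> Aplus A \<and> y \<in> Aplus A \<and>
     (\<forall>p q. p \<in> lists A \<longrightarrow> q \<in> lists A \<longrightarrow>
        (p @ x @ q \<in> powers u \<longleftrightarrow> p @ y @ q \<in> powers u))}"

end

theory Submission
  imports Defs
begin


definition fitsAt :: "'a list \<Rightarrow> nat \<Rightarrow> 'a list \<Rightarrow> bool" where
  "fitsAt u i x \<longleftrightarrow> (\<forall>j<length x. x!j = u!((i+j) mod length u))"

definition fits :: "'a list \<Rightarrow> 'a list \<Rightarrow> bool" where
  "fits w x \<longleftrightarrow> (\<forall>j<length x. x!j = w!(j mod length w))"

lemma fitsAt_append: "fitsAt u i (a@b) \<longleftrightarrow> fitsAt u i a \<and> fitsAt u (i+length a) b"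
proof -
  have "(\<forall>j<length (a@b). (a@b)!j = u!((i+j) mod length u)) \<longleftrightarrow>
        (\<forall>j<length a. (a@b)!j = u!((i+j) mod length u)) \<and>
        (\<forall>j<length b. (a@b)!(length a + j) = u!((i+(length a + j)) mod length u))"
  proof (intro iffI conjI allI impI)
    fix j assume h: "\<forall>j<length (a@b). (a@b)!j = u!((i+j) mod length u)"
    { assume "j < length a" then show "(a@b)!j = u!((i+j) mod length u)" using h by simp }
    { assume "j < length b" then show "(a@b)!(length a + j) = u!((i+(length a + j)) mod length u)"
        using h[rule_format, of "length a + j"] by simp }
  next
    fix j assume h: "(\<forall>j<length a. (a@b)!j = u!((i+j) mod length u)) \<and>
        (\<forall>j<length b. (a@b)!(length a + j) = u!((i+(length a + j)) mod length u))"
      and j: "j < length (a@b)"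
    show "(a@b)!j = u!((i+j) mod length u)"
    proof (cases "j < length a")
      case True then show ?thesis using h by simp
    next
      case False
      then obtain k where k: "j = length a + k" by (metis le_add_diff_inverse not_less)
      then show ?thesis using h j by auto
    qed
  qed
  then show ?thesis unfolding fitsAt_def by (simp add: nth_append add.assoc)
qed

lemma fitsAt_mod: "i mod length u = i' mod length u \<Longrightarrow> fitsAt u i x = fitsAt u i' x"
  unfolding fitsAt_def by (metis mod_add_left_eq)

lemma concat_replicate_nth:
  "j < m * length r \<Longrightarrow> concat (replicate m r) ! j = r ! (j mod length r)"
proof (induction m arbitrary: j)
  case 0 then show ?case by simp
next
  case (Suc m)
  show ?case
  proof (cases "j < length r")
    case True then show ?thesis by (simp add: nth_append)
  next
    case False
    then have "j - length r < m * length r" using Suc.prems by auto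
    then show ?thesis using False Suc.IH
      by (simp add: nth_append le_mod_geq)
  qed
qed

lemma length_concat_replicate: "length (concat (replicate m r)) = m * length r"
  by (induction m) auto

lemma powers_iff:
  assumes "u \<noteq> []"
  shows "z \<in> powers u \<longleftrightarrow> z \<noteq> [] \<and> length u dvd length z \<and> fitsAt u 0 z"
proof
  assume "z \<in> powers u"
  then obtain m where m: "m \<ge> 1" "z = concat (replicate m u)" unfolding powers_def by auto
  then show "z \<noteq> [] \<and> length u dvd length z \<and> fitsAt u 0 z"
    using assms by (auto simp: length_concat_replicate fitsAt_def concat_replicate_nth)
next
  assume h: "z \<noteq> [] \<and> length u dvd length z \<and> fitsAt u 0 z"
  then obtain m where m: "length z = length u * m" by (auto elim: dvdE)
  with h have "m \<ge> 1" by (cases m) auto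
  moreover have "z = concat (replicate m u)"
    apply (rule nth_equalityI)
    using h m by (auto simp: length_concat_replicate fitsAt_def concat_replicate_nth mult.commute)
  ultimately show "z \<in> powers u" unfolding powers_def by auto
qed

lemma necklace_rotate: "necklace u = range (\<lambda>k. rotate k u)"
proof
  show "necklace u \<subseteq> range (\<lambda>k. rotate k u)"
  proof
    fix w assume "w \<in> necklace u"
    then obtain x y where "u = x @ y" "w = y @ x" unfolding necklace_def by blast
    then have "w = rotate (length x) u" by (simp add: rotate_append)
    then show "w \<in> range (\<lambda>k. rotate k u)" by blast
  qed
  show "range (\<lambda>k. rotate k u) \<subseteq> necklace u"
  proof
    fix w assume "w \<in> range (\<lambda>k. rotate k u)"
    then obtain k where w: "w = rotate k u" by blast
    let ?m = "k mod length u"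
    have "u = take ?m u @ drop ?m u" by simp
    moreover have "w = drop ?m u @ take ?m u" using w by (simp add: rotate_drop_take)
    ultimately show "w \<in> necklace u" unfolding necklace_def by blast
  qed
qed

lemma fits_Cons: "w \<noteq> [] \<Longrightarrow> fits w (b#xs) \<longleftrightarrow> b = hd w \<and> fits (rotate1 w) xs"
  unfolding fits_def
  by (simp add: All_less_Suc2 hd_conv_nth nth_rotate1 mod_Suc_eq)

lemma necklace_length: "w \<in> necklace u \<Longrightarrow> length w = length u"
  by (auto simp: necklace_rotate)

lemma necklace_rotate1: "w \<in> necklace u \<Longrightarrow> rotate1 w \<in> necklace u"
proof -
  assume "w \<in> necklace u"
  then obtain k where "w = rotate k u" by (auto simp: necklace_rotate)
  then have "rotate1 w = rotate (Suc k) u" by simp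
  then show ?thesis unfolding necklace_rotate by (rule range_eqI)
qed

lemma letter_map_char: "u \<noteq> [] \<Longrightarrow> letter_map u b w =
     (if w \<in> necklace u \<and> fits w [b] then Some (rotate1 w) else None)"
proof (cases "w \<in> necklace u")
  case True
  assume u: "u \<noteq> []"
  then have ne: "w \<noteq> []" using True necklace_length by fastforce
  have "fits w [b] \<longleftrightarrow> b = hd w" using ne by (simp add: fits_Cons fits_def hd_conv_nth)
  then show ?thesis using True ne unfolding letter_map_def by (auto simp: rotate1_hd_tl)
next
  case False then show ?thesis unfolding letter_map_def by simp
qed

lemma word_map_char:
  "u \<noteq> [] \<Longrightarrow> x \<noteq> [] \<Longrightarrow> word_map u x w =
     (if w \<in> necklace u \<and> fits w x then Some (rotate (length x) w) else None)"
proof (induction u x arbitrary: w rule: word_map.induct)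
  case (1 u) then show ?case by simp
next
  case (2 u b)
  then show ?case by (simp add: letter_map_char)
next
  case (3 u b c bs)
  show ?case
  proof (cases "w \<in> necklace u \<and> fits w [b]")
    case True
    then have ne: "w \<noteq> []" using 3 necklace_length by fastforce
    have l: "letter_map u b w = Some (rotate1 w)" using True 3 by (simp add: letter_map_char)
    have r: "rotate1 w \<in> necklace u" using True necklace_rotate1 by blast
    have f: "fits w (b # c # bs) \<longleftrightarrow> fits (rotate1 w) (c # bs)"
      using True ne by (simp add: fits_Cons)
    have "word_map u (b # c # bs) w = word_map u (c # bs) (rotate1 w)" using l by simp
    also have "\<dots> = (if fits (rotate1 w) (c # bs) then Some (rotate (length (c#bs)) (rotate1 w)) else None)"
      using 3 r by simp
    also have "\<dots> = (if w \<in> necklace u \<and> fits w (b # c # bs) then Some (rotate (length (b#c#bs)) w) else None)"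
      using f True by (simp add: rotate1_rotate_swap)
    finally show ?thesis .
  next
    case False
    then have l: "letter_map u b w = None" using 3 by (simp add: letter_map_char)
    have "\<not> (w \<in> necklace u \<and> fits w (b # c # bs))"
      using False unfolding fits_def by auto
    then show ?thesis using l by simp
  qed
qed

lemma fits_rotate: "u \<noteq> [] \<Longrightarrow> fits (rotate k u) x = fitsAt u k x"
  unfolding fits_def fitsAt_def
  by (simp add: nth_rotate mod_add_right_eq add.commute)



lemma rotate_mult_id: "rotate d u = u \<Longrightarrow> rotate (d*c) u = u"
proof (induction c)
  case 0 then show ?case by simp
next
  case (Suc c)
  have "rotate (d * Suc c) u = rotate d (rotate (d*c) u)" by (simp add: rotate_rotate)
  then show ?case using Suc by simp
qed

lemma rotate_period:
  assumes "rotate g u = u" "0 < g" "g dvd length u" "u \<noteq> []"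
  shows "u = concat (replicate (length u div g) (take g u))"
proof -
  let ?n = "length u"
  have g: "g \<le> ?n" using assms(3,4) by (simp add: dvd_imp_le)
  have per: "j < ?n \<Longrightarrow> u!j = u!(j mod g)" for j
  proof (induction j rule: less_induct)
    case (less j)
    show ?case
    proof (cases "j < g")
      case True then show ?thesis by simp
    next
      case False
      then have lt: "j - g < ?n" using less.prems by simp
      have "u!(j-g) = (rotate g u)!(j-g)" using assms(1) by simp
      also have "\<dots> = u!((g + (j-g)) mod ?n)" using lt by (simp add: nth_rotate)
      also have "\<dots> = u!j" using False less.prems by simp
      finally have "u!j = u!(j-g)" by simp
      also have "\<dots> = u!((j-g) mod g)" using less.IH[of "j-g"] lt assms(2) False by simp
      also have "\<dots> = u!(j mod g)" using False by (simp add: le_mod_geq)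
      finally show ?thesis .
    qed
  qed
  have len: "?n div g * g = ?n" using assms(3) by simp
  show ?thesis
  proof (rule nth_equalityI)
    show "length u = length (concat (replicate (length u div g) (take g u)))"
      using g len by (simp add: length_concat_replicate)
    fix j assume j: "j < length u"
    have "concat (replicate (length u div g) (take g u)) ! j = take g u ! (j mod length (take g u))"
      using j g len by (intro concat_replicate_nth) (simp add: min_def)
    also have "\<dots> = u ! (j mod g)" using g assms(2) by (simp add: min_def)
    finally show "u ! j = concat (replicate (length u div g) (take g u)) ! j" using per j by simp
  qed
qed

lemma rotate_eq_mod_aux:
  assumes prim: "primitive u" and ne: "u \<noteq> []"
    and eq: "rotate a u = rotate b u" and lt: "b < a" and a: "a < length u"
  shows False
proof -
  let ?n = "length u"
  define d where "d = a - b"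
  have d: "0 < d" "d < ?n" using lt a by (auto simp: d_def)
  have "rotate d u = rotate (?n - b + a) u"
  proof -
    have "(?n - b + a) mod ?n = d" using lt a d_def by (simp add: mod_if)
    then show ?thesis by (metis rotate_conv_mod)
  qed
  also have "\<dots> = rotate (?n - b) (rotate a u)" by (simp add: rotate_rotate)
  also have "\<dots> = rotate (?n - b) (rotate b u)" using eq by simp
  also have "\<dots> = rotate ?n u" using lt a by (simp add: rotate_rotate)
  also have "\<dots> = u" by (metis mod_self rotate_conv_mod rotate0 id_apply)
  finally have rd: "rotate d u = u" .
  define g where "g = gcd d ?n"
  obtain x y where xy: "d * x = ?n * y + g" using bezout_nat[of d ?n] d g_def by auto
  have gpos: "0 < g" using d g_def by simp
  have gle: "g \<le> d" using d g_def by (simp add: gcd_le1_nat)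
  have gdvd: "g dvd ?n" using g_def by simp
  have "u = rotate (d*x) u" using rotate_mult_id[OF rd] by simp
  also have "\<dots> = rotate ((d*x) mod ?n) u" by (metis rotate_conv_mod)
  also have "(d*x) mod ?n = g" using xy gle d by simp
  finally have rg: "rotate g u = u" by simp
  have u: "u = concat (replicate (?n div g) (take g u))" using rotate_period[OF rg gpos gdvd ne] .
  have "?n div g \<ge> 2"
  proof -
    obtain k where k: "?n = g * k" using gdvd by auto
    then have "k \<ge> 2" using gle d gpos by (cases k; cases "k - 1") auto
    then show ?thesis using k gpos by simp
  qed
  then show False using prim u unfolding primitive_def by blast
qed

lemma rotate_eq_mod:
  assumes prim: "primitive u" and ne: "u \<noteq> []" and eq: "rotate a u = rotate b u"
  shows "a mod length u = b mod length u"
proof (rule ccontr)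
  assume h: "a mod length u \<noteq> b mod length u"
  have eq': "rotate (a mod length u) u = rotate (b mod length u) u" using eq by (metis rotate_conv_mod)
  have lt: "a mod length u < length u" "b mod length u < length u" using ne by auto
  show False
  proof (cases "a mod length u < b mod length u")
    case True then show ?thesis using rotate_eq_mod_aux[OF prim ne eq'[symmetric]] lt by blast
  next
    case False then show ?thesis using rotate_eq_mod_aux[OF prim ne eq'] lt h by simp
  qed
qed



lemma dvd_add_mod_eq:
  fixes n a b c :: nat
  assumes "n dvd a + c" "n dvd b + c" shows "a mod n = b mod n"
proof -
  obtain k where k: "a + c = n * k" using assms(1) by auto
  obtain l where l: "b + c = n * l" using assms(2) by auto
  have "int a + int c = int k * int n" using k by (metis of_nat_add of_nat_mult mult.commute)
  then have "int a = - int c + int k * int n" by linarith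
  then have A: "int a mod int n = (- int c) mod int n" by (simp only: mod_mult_self1)
  have "int b + int c = int l * int n" using l by (metis of_nat_add of_nat_mult mult.commute)
  then have "int b = - int c + int l * int n" by linarith
  then have B: "int b mod int n = (- int c) mod int n" by (simp only: mod_mult_self1)
  from A B have "int (a mod n) = int (b mod n)" by (simp add: of_nat_mod)
  then show ?thesis by simp
qed

lemma wm_fit:
  assumes "u \<noteq> []" "x \<noteq> []"
  shows "word_map u x (rotate k u) = (if fitsAt u k x then Some (rotate (k + length x) u) else None)"
proof -
  have "rotate k u \<in> necklace u" by (simp add: necklace_rotate)
  then show ?thesis using assms
    by (simp add: word_map_char fits_rotate rotate_rotate add.commute)
qed

lemma powers_ctx:
  assumes "u \<noteq> []" "x \<noteq> []"
  shows "p @ x @ q \<in> powers u \<longleftrightarrow> length u dvd (length p + length x + length q)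
     \<and> fitsAt u 0 p \<and> fitsAt u (length p) x \<and> fitsAt u (length p + length x) q"
  using assms by (simp add: powers_iff fitsAt_append add.assoc)

lemma wm_eq_imp_ctx:
  assumes prim: "primitive u" and u: "u \<noteq> []" and x: "x \<noteq> []" and y: "y \<noteq> []"
    and eq: "word_map u x = word_map u y" and pxq: "p @ x @ q \<in> powers u"
  shows "p @ y @ q \<in> powers u"
proof -
  let ?k = "length p" and ?n = "length u"
  have h: "?n dvd (?k + length x + length q)" "fitsAt u 0 p" "fitsAt u ?k x"
      "fitsAt u (?k + length x) q"
    using powers_ctx[OF u x] pxq by auto
  have "word_map u x (rotate ?k u) = Some (rotate (?k + length x) u)"
    using wm_fit[OF u x] h(3) by simp
  then have wy: "word_map u y (rotate ?k u) = Some (rotate (?k + length x) u)" using eq by simp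
  then have fy: "fitsAt u ?k y" and "rotate (?k + length y) u = rotate (?k + length x) u"
    using wm_fit[OF u y, of ?k] by (auto split: if_splits)
  then have m: "(?k + length y) mod ?n = (?k + length x) mod ?n" using rotate_eq_mod[OF prim u] by blast
  have fq: "fitsAt u (?k + length y) q" using fitsAt_mod[OF m] h(4) by simp
  have "?n dvd (?k + length y + length q)"
    using h(1) m by (simp add: dvd_eq_mod_eq_0 mod_add_left_eq[symmetric, of "?k + length y"]
        mod_add_left_eq[symmetric, of "?k + length x"])
  then show ?thesis using powers_ctx[OF u y] h fy fq by auto
qed

definition seg :: "'a list \<Rightarrow> nat \<Rightarrow> nat \<Rightarrow> 'a list" where
  "seg u i len = map (\<lambda>j. u!((i+j) mod length u)) [0..<len]"

lemma seg_fits: "fitsAt u i (seg u i len)"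
  unfolding fitsAt_def seg_def by simp

lemma seg_length[simp]: "length (seg u i len) = len"
  unfolding seg_def by simp

lemma seg_lists: "u \<noteq> [] \<Longrightarrow> set u \<subseteq> A \<Longrightarrow> seg u i len \<in> lists A"
  unfolding seg_def by (auto intro!: subsetD[of "set u" A] nth_mem)

lemma ctx_imp_wm:
  assumes u: "u \<noteq> []" and uA: "set u \<subseteq> A" and x: "x \<noteq> []" and y: "y \<noteq> []"
    and ctx: "\<forall>p q. p \<in> lists A \<longrightarrow> q \<in> lists A \<longrightarrow> (p @ x @ q \<in> powers u \<longleftrightarrow> p @ y @ q \<in> powers u)"
    and nn: "word_map u x w \<noteq> None"
  shows "word_map u y w = word_map u x w"
proof -
  let ?n = "length u"
  have "w \<in> necklace u" using nn word_map_char[OF u x] by (auto split: if_splits)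
  then obtain k0 where "w = rotate k0 u" by (auto simp: necklace_rotate)
  then have w: "w = rotate k u" and k: "k < ?n" if "k = k0 mod ?n" for k
    using u that by (auto simp: rotate_conv_mod[of k0])
  define k where "k = k0 mod ?n"
  have w: "w = rotate k u" and kl: "k < ?n" using w k k_def by auto
  have fx: "fitsAt u k x" using nn wm_fit[OF u x, of k] w by (auto split: if_splits)
  define s where "s = k + length x"
  define p where "p = seg u 0 k"
  define q where "q = seg u s (?n - s mod ?n)"
  have pl: "p \<in> lists A" "q \<in> lists A" using seg_lists[OF u uA] p_def q_def by auto
  have dv: "?n dvd (length p + length x + length q)"
  proof -
    have "s mod ?n < ?n" using u by simp
    have "length p + length x + length q = s + (?n - s mod ?n)" using p_def q_def s_def by simp
    also have "\<dots> = ?n * (s div ?n) + ?n" using \<open>s mod ?n < ?n\<close>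
      by (metis add.commute add_diff_inverse_nat diff_add_inverse2 div_mult_mod_eq group_cancel.add1
          less_imp_le_nat mult.commute not_le)
    finally show ?thesis by simp
  qed
  have "p @ x @ q \<in> powers u"
    using powers_ctx[OF u x] dv fx seg_fits p_def q_def s_def by auto
  then have "p @ y @ q \<in> powers u" using ctx pl by blast
  then have dy: "?n dvd (k + length y + length q)" and fy: "fitsAt u k y"
    using powers_ctx[OF u y] p_def by auto
  have "?n dvd (k + length x + length q)" using dv p_def by simp
  then have "(k + length y) mod ?n = (k + length x) mod ?n"
    using dy by (intro dvd_add_mod_eq[of _ _ "length q"]) auto
  then have "rotate (k + length y) u = rotate (k + length x) u" by (metis rotate_conv_mod)
  then show ?thesis using w wm_fit[OF u x] wm_fit[OF u y] fx fy by simp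
qed



lemma map_comp_assoc': "(h \<circ>\<^sub>m g) \<circ>\<^sub>m f = h \<circ>\<^sub>m (g \<circ>\<^sub>m f)"
  by (rule ext) (simp add: map_comp_def split: option.split)

lemma word_map_append:
  "x \<noteq> [] \<Longrightarrow> y \<noteq> [] \<Longrightarrow> word_map u (x @ y) = word_map u y \<circ>\<^sub>m word_map u x"
proof (induction u x rule: word_map.induct)
  case (1 u) then show ?case by simp
next
  case (2 u b)
  then obtain c bs where "y = c # bs" by (cases y) auto
  then show ?case by simp
next
  case (3 u b c bs)
  then show ?case by (simp add: map_comp_assoc')
qed

lemma Su_maps_eq: "Su_maps A u = word_map u ` Aplus A"
proof
  show "Su_maps A u \<subseteq> word_map u ` Aplus A"
  proof
    fix f assume "f \<in> Su_maps A u"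
    then show "f \<in> word_map u ` Aplus A"
    proof (induction rule: Su_maps.induct)
      case (gen a)
      then have "[a] \<in> Aplus A" by (simp add: Aplus_def)
      then show ?case by (metis image_eqI word_map.simps(2))
    next
      case (comp f g)
      then obtain x y where xy: "x \<in> Aplus A" "y \<in> Aplus A" "f = word_map u x" "g = word_map u y"
        by blast
      then have "x @ y \<in> Aplus A" "g \<circ>\<^sub>m f = word_map u (x @ y)"
        by (auto simp: Aplus_def word_map_append)
      then show ?case by blast
    qed
  qed
  show "word_map u ` Aplus A \<subseteq> Su_maps A u"
  proof
    fix f assume "f \<in> word_map u ` Aplus A"
    then obtain x where x: "x \<in> lists A" "x \<noteq> []" "f = word_map u x" by (auto simp: Aplus_def)
    have "x \<in> lists A \<Longrightarrow> x \<noteq> [] \<Longrightarrow> word_map u x \<in> Su_maps A u"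
    proof (induction u x rule: word_map.induct)
      case (1 u) then show ?case by simp
    next
      case (2 u b) then show ?case by (simp add: Su_maps.gen)
    next
      case (3 u b c bs) then show ?case by (simp add: Su_maps.gen Su_maps.comp)
    qed
    then show "f \<in> Su_maps A u" using x by simp
  qed
qed

lemma synt_cong_char:
  assumes u: "u \<in> Aplus A" and prim: "primitive u"
  shows "synt_cong A u = {(x, y). x \<in> Aplus A \<and> y \<in> Aplus A \<and> word_map u x = word_map u y}"
proof -
  have un: "u \<noteq> []" and uA: "set u \<subseteq> A" using u by (auto simp: Aplus_def)
  have "(x, y) \<in> synt_cong A u \<longleftrightarrow> word_map u x = word_map u y"
    if x: "x \<in> Aplus A" and y: "y \<in> Aplus A" for x y
  proof
    have xn: "x \<noteq> []" and yn: "y \<noteq> []" using x y by (auto simp: Aplus_def)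
    assume "(x, y) \<in> synt_cong A u"
    then have ctx: "\<forall>p q. p \<in> lists A \<longrightarrow> q \<in> lists A \<longrightarrow> (p @ x @ q \<in> powers u \<longleftrightarrow> p @ y @ q \<in> powers u)"
      unfolding synt_cong_def by auto
    then have ctx': "\<forall>p q. p \<in> lists A \<longrightarrow> q \<in> lists A \<longrightarrow> (p @ y @ q \<in> powers u \<longleftrightarrow> p @ x @ q \<in> powers u)"
      by blast
    show "word_map u x = word_map u y"
    proof
      fix w
      show "word_map u x w = word_map u y w"
      proof (cases "word_map u x w = None")
        case True
        show ?thesis
        proof (rule ccontr)
          assume "word_map u x w \<noteq> word_map u y w"
          then have "word_map u y w \<noteq> None" using True by simp
          then have "word_map u x w = word_map u y w" using ctx_imp_wm[OF un uA yn xn ctx'] by blast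
          then show False using \<open>word_map u x w \<noteq> word_map u y w\<close> by simp
        qed
      next
        case False
        then show ?thesis using ctx_imp_wm[OF un uA xn yn ctx] by simp
      qed
    qed
  next
    have xn: "x \<noteq> []" and yn: "y \<noteq> []" using x y by (auto simp: Aplus_def)
    assume eq: "word_map u x = word_map u y"
    show "(x, y) \<in> synt_cong A u"
      unfolding synt_cong_def using x y wm_eq_imp_ctx[OF prim un xn yn eq]
        wm_eq_imp_ctx[OF prim un yn xn eq[symmetric]] by blast
  qed
  moreover have "synt_cong A u \<subseteq> Aplus A \<times> Aplus A" unfolding synt_cong_def by auto
  ultimately show ?thesis by auto
qed

theorem theorem2p5:
  fixes A :: "('a::linorder) set" and u :: "'a list"
  assumes "finite A" and "u \<in> Aplus A" and "primitive u"
  shows "\<exists>\<phi>. (\<forall>x \<in> Aplus A. \<phi> (synt_cong A u `` {x}) = word_map u x)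
            \<and> bij_betw \<phi> (Aplus A // synt_cong A u) (Su_maps A u)
            \<and> (\<forall>x \<in> Aplus A. \<forall>y \<in> Aplus A.
                 \<phi> (synt_cong A u `` {x @ y}) = \<phi> (synt_cong A u `` {y}) \<circ>\<^sub>m \<phi> (synt_cong A u `` {x}))"
proof -
  let ?R = "synt_cong A u"
  have R: "?R = {(x, y). x \<in> Aplus A \<and> y \<in> Aplus A \<and> word_map u x = word_map u y}"
    using synt_cong_char[OF assms(2,3)] .
  have eqv: "equiv (Aplus A) ?R"
    unfolding R equiv_def refl_on_def sym_def trans_def by auto
  define \<phi> where "\<phi> C = word_map u (SOME x. x \<in> C)" for C
  have cls: "\<phi> (?R `` {x}) = word_map u x" if x: "x \<in> Aplus A" for x
  proof -
    have "x \<in> ?R `` {x}" using x R by auto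
    then have "(SOME y. y \<in> ?R `` {x}) \<in> ?R `` {x}" by (rule someI)
    then show ?thesis unfolding \<phi>_def using R by auto
  qed
  have inj: "inj_on \<phi> (Aplus A // ?R)"
  proof (rule inj_onI)
    fix C D assume C: "C \<in> Aplus A // ?R" and D: "D \<in> Aplus A // ?R" and e: "\<phi> C = \<phi> D"
    obtain x where x: "x \<in> Aplus A" "C = ?R `` {x}" using C by (auto elim: quotientE)
    obtain y where y: "y \<in> Aplus A" "D = ?R `` {y}" using D by (auto elim: quotientE)
    have "word_map u x = word_map u y" using e x y cls by simp
    then have "(x, y) \<in> ?R" using R x y by auto
    then show "C = D" using x y equiv_class_eq[OF eqv] by simp
  qed
  have img: "\<phi> ` (Aplus A // ?R) = Su_maps A u"
  proof -
    have "\<phi> ` (Aplus A // ?R) = word_map u ` Aplus A"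
    proof
      show "\<phi> ` (Aplus A // ?R) \<subseteq> word_map u ` Aplus A"
        using cls by (auto elim!: quotientE)
      show "word_map u ` Aplus A \<subseteq> \<phi> ` (Aplus A // ?R)"
      proof
        fix f assume "f \<in> word_map u ` Aplus A"
        then obtain x where "x \<in> Aplus A" "f = word_map u x" by blast
        then show "f \<in> \<phi> ` (Aplus A // ?R)" using cls by (metis image_eqI quotientI)
      qed
    qed
    then show ?thesis using Su_maps_eq[of A u] by simp
  qed
  have hom: "\<phi> (?R `` {x @ y}) = \<phi> (?R `` {y}) \<circ>\<^sub>m \<phi> (?R `` {x})"
    if "x \<in> Aplus A" "y \<in> Aplus A" for x y
  proof -
    have "x @ y \<in> Aplus A" using that by (auto simp: Aplus_def)
    then show ?thesis using that cls word_map_append by (auto simp: Aplus_def)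
  qed
  show ?thesis
    using cls inj img hom unfolding bij_betw_def by blast
qed

end
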